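(* Let $J=p\ge1$, $\sigma_\varepsilon^2>0$, $\sigma_\gamma^2>0$, $0\le\rho\le1$, and let $\mathbf{\Sigma}_\gamma=\sigma_\gamma^2\big((1-\rho)\mathbf{I}_J+\rho\mathbf{1}_J\mathbf{1}_J^{\mathrm T}\big)$ (compound symmetry). Let $\mathbf{A}_{\bm\beta}$ be a nonsingular $J\times J$ matrix and $I$ a positive integer. For an exact design $\xi=(I_1,\dots,I_J)$ (nonnegative integers with $\sum_jI_j=I$) let $$\mathbf{M}_{\bm\beta}(\xi)=\mathbf{A}_{\bm\beta}^{\mathrm T}\mathbf{M}_0(\xi)^{1/2}\big(\sigma_\varepsilon^2\mathbf{I}_J+\mathbf{M}_0(\xi)^{1/2}\mathbf{\Sigma}_\gamma\mathbf{M}_0(\xi)^{1/2}\big)^{-1}\mathbf{M}_0(\xi)^{1/2}\mathbf{A}_{\bm\beta},\quad \mathbf{M}_0(\xi)^{1/2}=\mathrm{diag}(\sqrt{I_1},\dots,\sqrt{I_J}).$$ Then an exact design is $D$-optimal among exact designs if $I_j^*=[I/J]+1$ for $J'=I \bmod J$ of the time points and $I_j^*=[I/J]$ for the remaining $J-J'$ time points. In particular, if $I$ is a multiple of $J$, the uniform design with $I_j^*=I/J$ for all $j=1,\dots,J$ is $D$-optimal.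
   Context: $[a]$ denotes the integer part of $a$ and $m\bmod n=m-n[m/n]$. $\mathbf{A}_{\bm\beta}$ is the Jacobian of the mean response curve at a fixed parameter $\bm\beta$ with as many parameters as time points. $\bm\beta$ is estimable under $\xi$ if $\mathbf{A}_{\bm\beta}$ has full column rank and its columns lie in the column space of $\mathrm{diag}(I_1,\dots,I_J)$ (here: all $I_j>0$). A design $\xi^*$ is $D$-optimal if $\log\det\mathbf{M}_{\bm\beta}(\xi^* )\ge\log\det\mathbf{M}_{\bm\beta}(\xi)$ for all designs $\xi$ (of the considered class, with total $I$) under which $\bm\beta$ is estimable. *)

theory Defs
  imports "HOL-Analysis.Analysis"
begin

text \<open>Time points are indexed by a finite type 'n, so J = CARD('n).
  An exact design is xi :: 'n => nat (numbers I_j of subjects at time point j).\<close>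

definition exact_design :: "nat \<Rightarrow> ('n::finite \<Rightarrow> nat) \<Rightarrow> bool" where
  "exact_design I xi \<longleftrightarrow> (\<Sum>j\<in>UNIV. xi j) = I"

definition Sigma_cs :: "real \<Rightarrow> real \<Rightarrow> real^'n^'n" where
  "Sigma_cs sg2 rho = sg2 *\<^sub>R ((1 - rho) *\<^sub>R mat 1 + rho *\<^sub>R (\<chi> i j. 1))"

definition M0_half :: "('n::finite \<Rightarrow> nat) \<Rightarrow> real^'n^'n" where
  "M0_half xi = (\<chi> i j. if i = j then sqrt (real (xi i)) else 0)"

definition info_matrix ::
  "real^'n^'n \<Rightarrow> real \<Rightarrow> real^'n^'n \<Rightarrow> ('n::finite \<Rightarrow> nat) \<Rightarrow> real^'n^'n" where
  "info_matrix A se2 Sg xi =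
     transpose A ** M0_half xi **
     matrix_inv (se2 *\<^sub>R mat 1 + M0_half xi ** Sg ** M0_half xi) **
     M0_half xi ** A"

text \<open>Estimability: A has full column rank and its columns lie in the column space
  of diag(I_1,...,I_J); as stated in the paper this amounts to all I_j > 0.\<close>
definition estimable :: "real^'n^'n \<Rightarrow> ('n::finite \<Rightarrow> nat) \<Rightarrow> bool" where
  "estimable A xi \<longleftrightarrow> rank A = CARD('n) \<and> (\<forall>j. xi j > 0)"

definition D_optimal_exact ::
  "real^'n^'n \<Rightarrow> real \<Rightarrow> real^'n^'n \<Rightarrow> nat \<Rightarrow> ('n::finite \<Rightarrow> nat) \<Rightarrow> bool" where
  "D_optimal_exact A se2 Sg I xs \<longleftrightarrow> exact_design I xs \<and>
     (\<forall>xi. exact_design I xi \<and> estimable A xi \<longrightarrow>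
        ln (det (info_matrix A se2 Sg xs)) \<ge> ln (det (info_matrix A se2 Sg xi)))"

end

theory Submission
  imports Defs
begin

lemma det_diag_but_row:
  fixes A :: "real^'n::finite^'n"
  assumes ld: "\<And>i j. i \<noteq> k \<Longrightarrow> i \<noteq> j \<Longrightarrow> A$i$j = 0"
  shows "det A = prod (\<lambda>i. A$i$i) (UNIV::'n set)"
proof -
  let ?U = "UNIV:: 'n set"
  let ?PU = "{p. p permutes ?U}"
  let ?pp = "\<lambda>p. of_int (sign p) * prod (\<lambda>i. A$i$p i) (UNIV :: 'n set)"
  have fU: "finite ?U" by simp
  from finite_permutations[OF fU] have fPU: "finite ?PU" .
  have id0: "{id} \<subseteq> ?PU"
    by (auto simp: permutes_id)
  have p0: "\<forall>p \<in> ?PU - {id}. ?pp p = 0"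
  proof
    fix p
    assume p: "p \<in> ?PU - {id}"
    then obtain i where i: "p i \<noteq> i"
      by fastforce
    have "\<exists>i \<in> ?U. A$i$p i = 0"
    proof (cases "i = k")
      case False then show ?thesis using ld i by (metis UNIV_I)
    next
      case True
      have pp: "p permutes ?U" using p by simp
      have "p (p k) \<noteq> p k"
      proof
        assume "p (p k) = p k"
        then have "p k = k" using permutes_inj[OF pp] by (meson injD)
        then show False using i True by simp
      qed
      moreover have "p k \<noteq> k" using i True by simp
      ultimately show ?thesis using ld by (metis UNIV_I)
    qed
    with prod_zero [OF fU] show "?pp p = 0"
      by force
  qed
  from sum.mono_neutral_cong_left[OF fPU id0 p0] show ?thesis
    unfolding det_def by (simp add: sign_id)
qed

lemma det_rank1_Z:
  fixes d u v :: "'n::finite \<Rightarrow> real" and w :: "real^'n" and e :: "'n \<Rightarrow> real^'n"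
  assumes "finite T" "z \<notin> T"
  shows "det ((\<chi> i. if i = z then c *s w else if i \<in> T then e i + u i *s w else e i) :: real^'n^'n)
       = det ((\<chi> i. if i = z then c *s w else e i) :: real^'n^'n)"
  using assms
proof (induction T rule: finite_induct)
  case empty
  show ?case by (rule arg_cong[where f=det]) (simp add: vec_eq_iff)
next
  case (insert y T)
  have yz: "y \<noteq> z" using insert by auto
  have eq: "((\<chi> i. if i = z then c *s w else if i \<in> insert y T then e i + u i *s w else e i) :: real^'n^'n)
    = (\<chi> i. if i = y then e y + u y *s w else (if i = z then c *s w else if i \<in> T then e i + u i *s w else e i))"
    using yz by (auto simp: vec_eq_iff)
  have eq1: "((\<chi> i. if i = y then e y else (if i = z then c *s w else if i \<in> T then e i + u i *s w else e i)) :: real^'n^'n)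
    = (\<chi> i. if i = z then c *s w else if i \<in> T then e i + u i *s w else e i)"
    using yz insert by (auto simp: vec_eq_iff)
  have eq2: "((\<chi> i. if i = y then u y *s w else (if i = z then c *s w else if i \<in> T then e i + u i *s w else e i)) :: real^'n^'n)
    = (\<chi> i. (if i = y then u y else if i = z then c else 1) *s (if i = y \<or> i = z then w else if i \<in> T then e i + u i *s w else e i))"
    using yz by (auto simp: vec_eq_iff)
  have z2: "det ((\<chi> i. (if i = y \<or> i = z then w else if i \<in> T then e i + u i *s w else e i)) :: real^'n^'n) = 0"
    by (rule det_identical_rows[OF yz]) (simp add: row_def vec_eq_iff)
  show ?case
    unfolding eq det_row_add eq1 eq2 det_rows_mul z2 using insert by simp
qed

lemma det_rank1_P:
  fixes d u v :: "'n::finite \<Rightarrow> real"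
  assumes "finite T"
  shows "det ((\<chi> i. if i \<in> T then (\<chi> j. if i = j then d i else 0) + u i *s (\<chi> j. v j)
               else (\<chi> j. if i = j then d i else 0)) :: real^'n^'n)
    = prod d UNIV + (\<Sum>k\<in>T. u k * v k * prod d (UNIV - {k}))"
  using assms
proof (induction T rule: finite_induct)
  case empty
  then show ?case by (subst det_diagonal) auto
next
  case (insert z T)
  define w :: "real^'n" where "w = (\<chi> j. v j)"
  define e :: "'n \<Rightarrow> real^'n" where "e i = (\<chi> j. if i = j then d i else 0)" for i
  have eq: "((\<chi> i. if i \<in> insert z T then e i + u i *s w else e i) :: real^'n^'n)
     = (\<chi> i. if i = z then e z + u z *s w else (if i \<in> T then e i + u i *s w else e i))"
    by (auto simp: vec_eq_iff)
  have eq1: "((\<chi> i. if i = z then e z else (if i \<in> T then e i + u i *s w else e i)) :: real^'n^'n)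
     = (\<chi> i. if i \<in> T then e i + u i *s w else e i)"
    using insert by (auto simp: vec_eq_iff)
  have eq2: "((\<chi> i. if i = z then u z *s w else (if i \<in> T then e i + u i *s w else e i)) :: real^'n^'n)
     = (\<chi> i. if i = z then u z *s w else if i \<in> T then e i + u i *s w else e i)"
    by (auto simp: vec_eq_iff)
  have d2: "det ((\<chi> i. if i = z then u z *s w else e i) :: real^'n^'n) = u z * v z * prod d (UNIV - {z})"
  proof -
    have "det ((\<chi> i. if i = z then u z *s w else e i) :: real^'n^'n) = prod (\<lambda>i. if i = z then u z * v z else d i) UNIV"
      unfolding e_def w_def by (subst det_diag_but_row[of z]) (auto, rule prod.cong, auto)
    also have "\<dots> = u z * v z * prod d (UNIV - {z})"
      by (subst prod.remove[of _ z]) (auto intro!: prod.cong)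
    finally show ?thesis .
  qed
  have step: "det ((\<chi> i. if i \<in> insert z T then e i + u i *s w else e i) :: real^'n^'n)
     = det ((\<chi> i. if i \<in> T then e i + u i *s w else e i) :: real^'n^'n) + u z * v z * prod d (UNIV - {z})"
  proof -
    have "det ((\<chi> i. if i = z then e z + u z *s w else (if i \<in> T then e i + u i *s w else e i)) :: real^'n^'n)
      = det ((\<chi> i. if i = z then e z else (if i \<in> T then e i + u i *s w else e i)) :: real^'n^'n)
      + det ((\<chi> i. if i = z then u z *s w else (if i \<in> T then e i + u i *s w else e i)) :: real^'n^'n)"
      by (rule det_row_add)
    also have "\<dots> = det ((\<chi> i. if i \<in> T then e i + u i *s w else e i) :: real^'n^'n)
      + det ((\<chi> i. if i = z then u z *s w else e i) :: real^'n^'n)"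
      using det_rank1_Z[where c="u z" and w=w and u=u and e=e, OF insert(1,2)] eq1 by simp
    finally show ?thesis using eq d2 by simp
  qed
  have IH: "det ((\<chi> i. if i \<in> T then e i + u i *s w else e i) :: real^'n^'n)
     = prod d UNIV + (\<Sum>k\<in>T. u k * v k * prod d (UNIV - {k}))"
    using insert(3) unfolding e_def w_def .
  have "det ((\<chi> i. if i \<in> insert z T then e i + u i *s w else e i) :: real^'n^'n)
     = prod d UNIV + (\<Sum>k\<in>insert z T. u k * v k * prod d (UNIV - {k}))"
    unfolding step IH using insert(1,2) by simp
  then show ?case unfolding e_def w_def .
qed

lemma det_rank1:
  fixes d u v :: "'n::finite \<Rightarrow> real"
  shows "det ((\<chi> i j. (if i = j then d i else 0) + u i * v j) :: real^'n^'n)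
    = prod d UNIV + (\<Sum>k\<in>UNIV. u k * v k * prod d (UNIV - {k}))"
proof -
  have "((\<chi> i j. (if i = j then d i else 0) + u i * v j) :: real^'n^'n) =
    (\<chi> i. if i \<in> UNIV then (\<chi> j. if i = j then d i else 0) + u i *s (\<chi> j. v j)
               else (\<chi> j. if i = j then d i else 0))"
    by (simp add: vec_eq_iff)
  then show ?thesis using det_rank1_P[of UNIV d u v] by simp
qed


lemma sum_delta_mult1:
  "(\<Sum>k\<in>(UNIV::'n::finite set). (if i = k then a k else 0) * (f k::real)) = a i * f i"
proof -
  have "(\<Sum>k\<in>(UNIV::'n set). (if i = k then a k else 0) * f k) = (\<Sum>k\<in>UNIV. if i = k then a k * f k else 0)"
    by (rule sum.cong) auto
  then show ?thesis by simp
qed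

lemma sum_delta_mult2:
  "(\<Sum>k\<in>(UNIV::'n::finite set). (f k::real) * (if k = j then a k else 0)) = f j * a j"
proof -
  have "(\<Sum>k\<in>(UNIV::'n set). f k * (if k = j then a k else 0)) = (\<Sum>k\<in>UNIV. if k = j then f k * a k else 0)"
    by (rule sum.cong) auto
  then show ?thesis by simp
qed

lemma X_form:
  fixes n :: "'n::finite \<Rightarrow> nat"
  shows "se2 *\<^sub>R mat 1 + M0_half n ** Sigma_cs sg2 rho ** M0_half n
    = (\<chi> i j. (if i = j then se2 + sg2 * (1-rho) * real (n i) else 0) + (sqrt (real (n i)) * sg2 * rho) * sqrt (real (n j)))"
proof -
  have H: "(M0_half n ** Sigma_cs sg2 rho ** M0_half n) $ i $ j =
     sqrt (real (n i)) * (sg2 * ((1-rho) * (if i = j then 1 else 0) + rho)) * sqrt (real (n j))" for i j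
    unfolding matrix_matrix_mult_def M0_half_def Sigma_cs_def
    by (simp add: sum_delta_mult1 sum_delta_mult2 mat_def)
  show ?thesis
  proof (rule vec_eq_iff[THEN iffD2], intro allI, rule vec_eq_iff[THEN iffD2], intro allI)
    fix i j
    show "(se2 *\<^sub>R mat 1 + M0_half n ** Sigma_cs sg2 rho ** M0_half n) $ i $ j =
      (\<chi> i j. (if i = j then se2 + sg2 * (1-rho) * real (n i) else 0) + (sqrt (real (n i)) * sg2 * rho) * sqrt (real (n j))) $ i $ j"
    proof (cases "i = j")
      case True
      have "sqrt (real (n j)) * sqrt (real (n j)) = real (n j)" by simp
      then show ?thesis using H[of i j] True by (simp add: mat_def algebra_simps)
    next
      case False
      then show ?thesis using H[of i j] by (simp add: mat_def algebra_simps)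
    qed
  qed
qed

lemma detX:
  fixes n :: "'n::finite \<Rightarrow> nat"
  shows "det (se2 *\<^sub>R mat 1 + M0_half n ** Sigma_cs sg2 rho ** M0_half n)
    = prod (\<lambda>i. se2 + sg2 * (1-rho) * real (n i)) UNIV
      + (\<Sum>k\<in>UNIV. sg2 * rho * real (n k) * prod (\<lambda>i. se2 + sg2 * (1-rho) * real (n i)) (UNIV - {k}))"
proof -
  have sq: "sqrt (real (n k)) * sg2 * rho * sqrt (real (n k)) = sg2 * rho * real (n k)" for k
  proof -
    have "sqrt (real (n k)) * sqrt (real (n k)) = real (n k)" by simp
    then show ?thesis by (metis mult.commute mult.left_commute)
  qed
  show ?thesis by (simp only: X_form det_rank1 sq)
qed

lemma detX_pos:
  fixes n :: "'n::finite \<Rightarrow> nat"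
  assumes "se2 > 0" "sg2 > 0" "0 \<le> rho" "rho \<le> 1"
  shows "det (se2 *\<^sub>R mat 1 + M0_half n ** Sigma_cs sg2 rho ** M0_half n) > 0"
proof -
  have d: "se2 + sg2 * (1-rho) * real (n i) > 0" for i
    using assms by (simp add: add_pos_nonneg)
  have "prod (\<lambda>i. se2 + sg2 * (1-rho) * real (n i)) UNIV > 0"
    using d by (simp add: prod_pos)
  moreover have "(\<Sum>k\<in>UNIV. sg2 * rho * real (n k) * prod (\<lambda>i. se2 + sg2 * (1-rho) * real (n i)) (UNIV - {k})) \<ge> 0"
    using d assms by (intro sum_nonneg mult_nonneg_nonneg prod_nonneg) (auto intro: less_imp_le)
  ultimately show ?thesis unfolding detX by simp
qed

lemma det_info:
  fixes n :: "'n::finite \<Rightarrow> nat" and A :: "real^'n^'n"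
  assumes "se2 > 0" "sg2 > 0" "0 \<le> rho" "rho \<le> 1"
  shows "det (info_matrix A se2 (Sigma_cs sg2 rho) n)
    = det A ^ 2 * prod (\<lambda>i. real (n i)) UNIV / det (se2 *\<^sub>R mat 1 + M0_half n ** Sigma_cs sg2 rho ** M0_half n)"
proof -
  define X where "X = se2 *\<^sub>R mat 1 + M0_half n ** Sigma_cs sg2 rho ** M0_half n"
  have dX: "det X > 0" unfolding X_def using detX_pos[OF assms] .
  then have "invertible X" by (simp add: invertible_det_nz)
  then have "X ** matrix_inv X = mat 1 \<and> matrix_inv X ** X = mat 1"
    unfolding invertible_def matrix_inv_def by (rule someI_ex)
  then have "det X * det (matrix_inv X) = 1" by (metis det_I det_mul)
  then have dI: "det (matrix_inv X) = 1 / det X" using dX by (simp add: field_simps)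
  have dD: "det (M0_half n) = prod (\<lambda>i. sqrt (real (n i))) UNIV"
    unfolding M0_half_def by (subst det_diagonal) auto
  have "prod (\<lambda>i. sqrt (real (n i))) UNIV * prod (\<lambda>i. sqrt (real (n i))) UNIV = prod (\<lambda>i. real (n i)) UNIV"
    by (simp add: prod.distrib[symmetric])
  then show ?thesis
    unfolding info_matrix_def X_def[symmetric] det_mul dI dD det_transpose
    by (simp add: power2_eq_square field_simps)
qed


lemma sum_vals:
  fixes n :: "'n::finite \<Rightarrow> nat"
  assumes "\<forall>i. n i = m \<or> n i = m + 1"
  shows "sum n UNIV = m * CARD('n) + card {i. n i = m + 1}"
proof -
  have "sum n UNIV = (\<Sum>i\<in>UNIV. m + (if n i = m + 1 then 1 else 0))"
    using assms by (intro sum.cong) auto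
  also have "\<dots> = m * CARD('n) + card {i. n i = m + 1}"
    by (simp add: sum.distrib sum.If_cases)
  finally show ?thesis .
qed

lemma num1:
  fixes u v :: real
  assumes "u \<ge> v + 2" "v \<ge> 1"
  shows "1/(u-1) + 1/(v+1) \<le> 1/u + 1/v"
proof -
  have e1: "1/(u-1) - 1/u = 1/(u * (u-1))" using assms by (simp add: field_simps)
  have e2: "1/v - 1/(v+1) = 1/(v * (v+1))" using assms by (simp add: field_simps)
  have "v * (v+1) \<le> u * (u-1)" using assms by (intro mult_mono) auto
  then have "1/(u * (u-1)) \<le> 1/(v * (v+1))" using assms by (intro frac_le) auto
  then show ?thesis using e1 e2 by linarith
qed

lemma num2:
  fixes u v :: real
  assumes "u \<ge> v + 2" "v \<ge> 1"
  shows "1/((u-1) * (v+1)) \<le> 1/(u * v)"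
proof -
  have "u * v \<le> (u-1) * (v+1)" using assms by (simp add: algebra_simps)
  moreover have "u * v > 0" using assms by simp
  ultimately show ?thesis by (simp add: frac_le)
qed

lemma sum_two:
  fixes g :: "'n::finite \<Rightarrow> 'a::comm_monoid_add"
  assumes "k \<noteq> l"
  shows "sum g UNIV = g k + g l + sum g (UNIV - {k, l})"
proof -
  have "sum g UNIV = g k + sum g (UNIV - {k})" by (subst sum.remove[of _ k]) auto
  also have "sum g (UNIV - {k}) = g l + sum g (UNIV - {k} - {l})" using assms by (subst sum.remove[of _ l]) auto
  also have "UNIV - {k} - {l} = UNIV - {k, l}" by auto
  finally show ?thesis by (simp add: add.assoc)
qed

lemma prod_two:
  fixes g :: "'n::finite \<Rightarrow> real"
  assumes "k \<noteq> l"
  shows "prod g UNIV = g k * g l * prod g (UNIV - {k, l})"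
proof -
  have "prod g UNIV = g k * prod g (UNIV - {k})" by (subst prod.remove[of _ k]) auto
  also have "prod g (UNIV - {k}) = g l * prod g (UNIV - {k} - {l})" using assms by (subst prod.remove[of _ l]) auto
  also have "UNIV - {k} - {l} = UNIV - {k, l}" by auto
  finally show ?thesis by simp
qed

lemma exch:
  fixes a :: "'n::finite \<Rightarrow> real"
  assumes kl: "k \<noteq> l" and apos: "\<forall>i. a i > 0" and x'y': "x' > 0" "y' > 0"
    and prodle: "x' * y' \<le> a k * a l" and sumle: "x' + y' \<le> a k + a l" and b: "b \<ge> 0"
  shows "prod (a(k:=x', l:=y')) UNIV * (1 + b * sum (\<lambda>i. 1 / (a(k:=x', l:=y')) i) UNIV)
    \<le> prod a UNIV * (1 + b * sum (\<lambda>i. 1 / a i) UNIV)"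
proof -
  define a' where "a' = a(k:=x', l:=y')"
  define W where "W = UNIV - {k, l}"
  define Q where "Q = prod a W"
  define T where "T = sum (\<lambda>i. 1 / a i) W"
  have Q': "prod a' W = Q" unfolding Q_def a'_def W_def by (intro prod.cong) auto
  have T': "sum (\<lambda>i. 1 / a' i) W = T" unfolding T_def a'_def W_def by (intro sum.cong) auto
  have Qpos: "Q > 0" unfolding Q_def using apos by (simp add: prod_pos)
  have Tnn: "T \<ge> 0" unfolding T_def using apos by (simp add: sum_nonneg less_imp_le)
  have ak: "a' k = x'" and al: "a' l = y'" unfolding a'_def using kl by auto
  have x: "a k > 0" "a l > 0" using apos by auto
  have L: "prod a' UNIV * (1 + b * sum (\<lambda>i. 1 / a' i) UNIV) = Q * (x' * y' * (1 + b * T) + b * (x' + y'))"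
    unfolding prod_two[OF kl, of a'] sum_two[OF kl, of "\<lambda>i. 1 / a' i"] W_def[symmetric] Q' T' ak al
    using x'y' by (simp add: field_simps)
  have R: "prod a UNIV * (1 + b * sum (\<lambda>i. 1 / a i) UNIV) = Q * (a k * a l * (1 + b * T) + b * (a k + a l))"
    unfolding prod_two[OF kl, of a] sum_two[OF kl, of "\<lambda>i. 1 / a i"] W_def[symmetric] Q_def[symmetric] T_def[symmetric]
    using x by (simp add: field_simps)
  have "x' * y' * (1 + b * T) \<le> a k * a l * (1 + b * T)"
    using prodle b Tnn by (intro mult_right_mono) auto
  moreover have "b * (x' + y') \<le> b * (a k + a l)" using sumle b by (intro mult_left_mono) auto
  ultimately have "x' * y' * (1 + b * T) + b * (x' + y') \<le> a k * a l * (1 + b * T) + b * (a k + a l)" by linarith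
  then have "Q * (x' * y' * (1 + b * T) + b * (x' + y')) \<le> Q * (a k * a l * (1 + b * T) + b * (a k + a l))"
    using Qpos by (intro mult_left_mono) auto
  then show ?thesis using L R unfolding a'_def by simp
qed

lemma prod_expand:
  fixes p q :: real
  assumes "p \<noteq> 0" "q \<noteq> 0"
  shows "(s/p + c) * (s/q + c) = s * s * (1/(p * q)) + c * s * (1/p + 1/q) + c * c"
  using assms by (simp add: field_simps)

definition hf :: "real \<Rightarrow> real \<Rightarrow> nat \<Rightarrow> real" where
  "hf se2 c x = se2 / real x + c"

definition Kf :: "real \<Rightarrow> real \<Rightarrow> real \<Rightarrow> ('n::finite \<Rightarrow> nat) \<Rightarrow> real" where
  "Kf se2 c b n = prod (\<lambda>i. hf se2 c (n i)) UNIV * (1 + b * (\<Sum>i\<in>UNIV. 1 / hf se2 c (n i)))"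

lemma Kf_step:
  fixes n :: "'n::finite \<Rightarrow> nat"
  assumes se2: "se2 > 0" and c: "c \<ge> 0" and b: "b \<ge> 0" and pos: "\<forall>i. n i \<ge> 1"
    and kl: "n k \<ge> n l + 2"
  shows "Kf se2 c b (n(k := n k - 1, l := n l + 1)) \<le> Kf se2 c b n"
proof -
  have kl': "k \<noteq> l" using kl by auto
  define a where "a i = hf se2 c (n i)" for i
  define u where "u = real (n k)"
  define v where "v = real (n l)"
  have uv: "u \<ge> v + 2" "v \<ge> 1" using kl pos unfolding u_def v_def by (auto simp: Suc_le_eq)
  have eqa: "(\<lambda>i. hf se2 c ((n(k := n k - 1, l := n l + 1)) i)) = a(k := se2/(u-1) + c, l := se2/(v+1) + c)"
    using kl' kl unfolding a_def hf_def u_def v_def by (auto simp: fun_eq_iff of_nat_diff)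
  have apos: "\<forall>i. a i > 0" unfolding a_def hf_def using se2 c pos
    by (auto intro!: add_pos_nonneg simp: Suc_le_eq)
  have ak: "a k = se2/u + c" and al: "a l = se2/v + c" unfolding a_def hf_def u_def v_def by auto
  have p1: "se2/(u-1) + c > 0" "se2/(v+1) + c > 0" using se2 c uv by (auto intro!: add_pos_nonneg)
  have n1: "1/(u-1) + 1/(v+1) \<le> 1/u + 1/v" using num1[OF uv] .
  have n2: "1/((u-1) * (v+1)) \<le> 1/(u * v)" using num2[OF uv] .
  have sumle: "(se2/(u-1) + c) + (se2/(v+1) + c) \<le> a k + a l"
  proof -
    have "se2 * (1/(u-1) + 1/(v+1)) \<le> se2 * (1/u + 1/v)" using n1 se2 by (intro mult_left_mono) auto
    then show ?thesis unfolding ak al by (simp add: field_simps)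
  qed
  have prodle: "(se2/(u-1) + c) * (se2/(v+1) + c) \<le> a k * a l"
  proof -
    have e1: "(se2/(u-1) + c) * (se2/(v+1) + c) = se2 * se2 * (1/((u-1) * (v+1))) + c * se2 * (1/(u-1) + 1/(v+1)) + c * c"
      using prod_expand[of "u-1" "v+1" se2 c] uv by simp
    have e2: "a k * a l = se2 * se2 * (1/(u * v)) + c * se2 * (1/u + 1/v) + c * c"
      unfolding ak al using prod_expand[of u v se2 c] uv by simp
    have "se2 * se2 * (1/((u-1) * (v+1))) \<le> se2 * se2 * (1/(u * v))" using n2 se2 by (intro mult_left_mono) auto
    moreover have "c * se2 * (1/(u-1) + 1/(v+1)) \<le> c * se2 * (1/u + 1/v)" using n1 se2 c by (intro mult_left_mono) auto
    ultimately show ?thesis unfolding e1 e2 by linarith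
  qed
  have eqa': "hf se2 c ((n(k := n k - 1, l := n l + 1)) i) = (a(k := se2/(u-1) + c, l := se2/(v+1) + c)) i" for i
    using eqa by (metis (no_types, lifting))
  have K1: "Kf se2 c b (n(k := n k - 1, l := n l + 1)) = prod (a(k := se2/(u-1) + c, l := se2/(v+1) + c)) UNIV
      * (1 + b * sum (\<lambda>i. 1 / (a(k := se2/(u-1) + c, l := se2/(v+1) + c)) i) UNIV)"
    unfolding Kf_def eqa' ..
  have K2: "Kf se2 c b n = prod a UNIV * (1 + b * sum (\<lambda>i. 1 / a i) UNIV)"
    unfolding Kf_def a_def ..
  show ?thesis
    unfolding K1 K2 by (rule exch[OF kl' apos p1 prodle sumle b])
qed


lemma descent:
  fixes F :: "('n::finite \<Rightarrow> nat) \<Rightarrow> real" and xs :: "'n \<Rightarrow> nat"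
  assumes step: "\<And>n k l. \<forall>i. n i \<ge> 1 \<Longrightarrow> n k \<ge> n l + 2 \<Longrightarrow> F (n(k := n k - 1, l := n l + 1)) \<le> F n"
    and bal: "\<And>n. \<forall>i. n i \<ge> 1 \<Longrightarrow> sum n UNIV = I \<Longrightarrow> \<forall>k l. n k < n l + 2 \<Longrightarrow> F xs \<le> F n"
  shows "\<forall>i. n i \<ge> 1 \<Longrightarrow> sum n UNIV = I \<Longrightarrow> F xs \<le> F n"
proof (induction "\<Sum>i\<in>UNIV. n i ^ 2" arbitrary: n rule: less_induct)
  case less
  show ?case
  proof (cases "\<forall>k l. n k < n l + 2")
    case True
    then show ?thesis using bal less.prems by blast
  next
    case False
    then obtain k l where kl: "n k \<ge> n l + 2" by (auto simp: not_less)
    define n' where "n' = n(k := n k - 1, l := n l + 1)"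
    have kl': "k \<noteq> l" using kl by auto
    have pos': "\<forall>i. n' i \<ge> 1" using less.prems kl unfolding n'_def by auto
    have W: "sum n' (UNIV - {k, l}) = sum n (UNIV - {k, l})"
      unfolding n'_def by (intro sum.cong) auto
    have W2: "(\<Sum>i\<in>UNIV - {k, l}. n' i ^ 2) = (\<Sum>i\<in>UNIV - {k, l}. n i ^ 2)"
      unfolding n'_def by (intro sum.cong) auto
    have nk: "n' k = n k - 1" "n' l = n l + 1" unfolding n'_def using kl' by auto
    have sum': "sum n' UNIV = I"
      using sum_two[OF kl', of n'] sum_two[OF kl', of n] W nk kl less.prems(2) by simp
    obtain t e where te: "n l = t" "n k = t + 2 + e" using kl le_Suc_ex by (metis add.commute)
    have sq: "(n k - 1)^2 + (n l + 1)^2 < n k ^ 2 + n l ^ 2"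
      unfolding te by (simp add: power2_eq_square algebra_simps)
    have lt: "(\<Sum>i\<in>UNIV. n' i ^ 2) < (\<Sum>i\<in>UNIV. n i ^ 2)"
      using sum_two[OF kl', of "\<lambda>i. n' i ^ 2"] sum_two[OF kl', of "\<lambda>i. n i ^ 2"] W2 nk sq by simp
    have "F xs \<le> F n'" using less.hyps[OF lt pos' sum'] .
    also have "F n' \<le> F n" unfolding n'_def using step less.prems(1) kl by blast
    finally show ?thesis .
  qed
qed

lemma balanced:
  fixes n :: "'n::finite \<Rightarrow> nat"
  assumes close: "\<forall>k l. n k < n l + 2" and s: "sum n UNIV = I"
  shows "(\<forall>i. n i = I div CARD('n) \<or> n i = I div CARD('n) + 1) \<and> card {i. n i = I div CARD('n) + 1} = I mod CARD('n)"
proof -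
  define m where "m = Min (range n)"
  have "m \<in> range n" unfolding m_def by (rule Min_in) auto
  then obtain i0 where i0: "n i0 = m" by auto
  have ge: "n i \<ge> m" for i unfolding m_def by (simp add: Min_le)
  have vals: "\<forall>i. n i = m \<or> n i = m + 1"
  proof
    fix i
    have "n i < m + 2" using close i0 by metis
    then show "n i = m \<or> n i = m + 1" using ge[of i] by arith
  qed
  have c: "card {i. n i = m + 1} < CARD('n)"
  proof (rule psubset_card_mono)
    show "finite (UNIV::'n set)" by simp
    have "i0 \<notin> {i. n i = m + 1}" using i0 by simp
    then show "{i. n i = m + 1} \<subset> UNIV" by blast
  qed
  have I: "I = m * CARD('n) + card {i. n i = m + 1}" using sum_vals[OF vals] s by simp
  have q: "I div CARD('n) = m" using I c by simp
  have r: "I mod CARD('n) = card {i. n i = m + 1}" using I c by simp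
  show ?thesis using vals q r by simp
qed

lemma prod_vals:
  fixes n :: "'n::finite \<Rightarrow> nat" and g :: "nat \<Rightarrow> real"
  assumes "\<forall>i. n i = q \<or> n i = q + 1"
  shows "prod (\<lambda>i. g (n i)) UNIV = g (q+1) ^ card {i. n i = q + 1} * g q ^ (CARD('n) - card {i. n i = q + 1})"
    and "sum (\<lambda>i. g (n i)) UNIV = real (card {i. n i = q + 1}) * g (q+1) + real (CARD('n) - card {i. n i = q + 1}) * g q"
proof -
  have e: "g (n i) = (if n i = q + 1 then g (q+1) else g q)" for i using assms by (metis add_right_cancel add_0_right one_neq_zero)
  have cc: "card (UNIV \<inter> - {i. n i = q + 1}) = CARD('n) - card {i. n i = q + 1}"
  proof -
    have "UNIV \<inter> - {i. n i = q + 1} = UNIV - {i. n i = q + 1}" by auto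
    then show ?thesis by (simp add: card_Diff_subset)
  qed
  show "prod (\<lambda>i. g (n i)) UNIV = g (q+1) ^ card {i. n i = q + 1} * g q ^ (CARD('n) - card {i. n i = q + 1})"
    unfolding e prod.If_cases[where A=UNIV, OF finite_class.finite_UNIV] using cc by simp
  show "sum (\<lambda>i. g (n i)) UNIV = real (card {i. n i = q + 1}) * g (q+1) + real (CARD('n) - card {i. n i = q + 1}) * g q"
    unfolding e sum.If_cases[where A=UNIV, OF finite_class.finite_UNIV] using cc by simp
qed

lemma Kf_bal_eq:
  fixes n xs :: "'n::finite \<Rightarrow> nat"
  assumes "\<forall>i. n i = q \<or> n i = q + 1" "\<forall>i. xs i = q \<or> xs i = q + 1"
    "card {i. n i = q + 1} = card {i. xs i = q + 1}"
  shows "Kf se2 c b n = Kf se2 c b xs"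
  unfolding Kf_def
  using prod_vals(1)[OF assms(1), of "hf se2 c"] prod_vals(1)[OF assms(2), of "hf se2 c"]
    prod_vals(2)[OF assms(1), of "\<lambda>x. 1 / hf se2 c x"] prod_vals(2)[OF assms(2), of "\<lambda>x. 1 / hf se2 c x"]
    assms(3) by simp

lemma detX_Kf:
  fixes n :: "'n::finite \<Rightarrow> nat"
  assumes se2: "se2 > 0" and sg2: "sg2 > 0" and rho: "0 \<le> rho" "rho \<le> 1" and pos: "\<forall>i. n i > 0"
  shows "det (se2 *\<^sub>R mat 1 + M0_half n ** Sigma_cs sg2 rho ** M0_half n)
    = prod (\<lambda>i. real (n i)) UNIV * Kf se2 (sg2 * (1 - rho)) (sg2 * rho) n"
proof -
  define c where "c = sg2 * (1 - rho)"
  define b where "b = sg2 * rho"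
  define d where "d i = se2 + c * real (n i)" for i
  have c0: "c \<ge> 0" unfolding c_def using sg2 rho by simp
  have dpos: "d i > 0" for i unfolding d_def using se2 c0 by (simp add: add_pos_nonneg)
  have npos: "real (n i) > 0" for i using pos by simp
  have rem: "prod d (UNIV - {k}) = prod d UNIV / d k" for k
  proof -
    have "prod d UNIV = d k * prod d (UNIV - {k})" by (subst prod.remove[of _ k]) auto
    then show ?thesis using dpos[of k] by (simp add: field_simps)
  qed
  have "det (se2 *\<^sub>R mat 1 + M0_half n ** Sigma_cs sg2 rho ** M0_half n)
      = prod d UNIV + (\<Sum>k\<in>UNIV. b * real (n k) * (prod d UNIV / d k))"
    unfolding detX c_def[symmetric] d_def[symmetric] b_def[symmetric] rem ..
  also have "\<dots> = prod d UNIV * (1 + b * (\<Sum>k\<in>UNIV. real (n k) / d k))"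
    by (simp add: sum_distrib_left sum_divide_distrib algebra_simps)
  also have "\<dots> = prod (\<lambda>i. real (n i)) UNIV * Kf se2 c b n"
  proof -
    have h: "hf se2 c (n i) = d i / real (n i)" for i
      unfolding hf_def d_def using npos[of i] by (simp add: field_simps)
    have p: "prod (\<lambda>i. real (n i)) UNIV * prod (\<lambda>i. d i / real (n i)) UNIV = prod d UNIV"
      using npos by (simp add: prod.distrib[symmetric])
    have s: "(\<Sum>i\<in>UNIV. 1 / (d i / real (n i))) = (\<Sum>k\<in>UNIV. real (n k) / d k)" by simp
    show ?thesis unfolding Kf_def h s using p by (simp add: algebra_simps)
  qed
  finally show ?thesis unfolding c_def b_def .
qed

lemma aux_cancel: "(p::real) > 0 \<Longrightarrow> x * p / (p * k) = x / k"
  by (cases "k = 0") (simp_all add: field_simps)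

lemma det_info_Kf:
  fixes n :: "'n::finite \<Rightarrow> nat" and A :: "real^'n^'n"
  assumes se2: "se2 > 0" and sg2: "sg2 > 0" and rho: "0 \<le> rho" "rho \<le> 1" and pos: "\<forall>i. n i > 0"
  shows "det (info_matrix A se2 (Sigma_cs sg2 rho) n) = det A ^ 2 / Kf se2 (sg2 * (1 - rho)) (sg2 * rho) n"
    and "Kf se2 (sg2 * (1 - rho)) (sg2 * rho) n > 0"
proof -
  have pp: "prod (\<lambda>i. real (n i)) UNIV > 0" using pos by (simp add: prod_pos)
  have dX: "det (se2 *\<^sub>R mat 1 + M0_half n ** Sigma_cs sg2 rho ** M0_half n) > 0"
    using detX_pos[OF se2 sg2 rho] .
  show "Kf se2 (sg2 * (1 - rho)) (sg2 * rho) n > 0"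
    using dX pp unfolding detX_Kf[OF assms] by (simp add: zero_less_mult_iff)
  show "det (info_matrix A se2 (Sigma_cs sg2 rho) n) = det A ^ 2 / Kf se2 (sg2 * (1 - rho)) (sg2 * rho) n"
    unfolding det_info[OF se2 sg2 rho] detX_Kf[OF assms] using aux_cancel[OF pp] by simp
qed

lemma main_part:
  fixes A :: "real^'n::finite^'n" and se2 sg2 rho :: real and I :: nat
    and xs :: "'n \<Rightarrow> nat"
  assumes se2: "se2 > 0" and sg2: "sg2 > 0" and rho: "0 \<le> rho" "rho \<le> 1"
    and inv: "invertible A"
    and xsv: "\<forall>j. xs j = I div CARD('n) \<or> xs j = I div CARD('n) + 1"
    and xsc: "card {j. xs j = I div CARD('n) + 1} = I mod CARD('n)"
  shows "D_optimal_exact A se2 (Sigma_cs sg2 rho) I xs"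
proof -
  define c where "c = sg2 * (1 - rho)"
  define b where "b = sg2 * rho"
  have c0: "c \<ge> 0" unfolding c_def using sg2 rho by simp
  have b0: "b \<ge> 0" unfolding b_def using sg2 rho by simp
  have ex: "exact_design I xs"
    unfolding exact_design_def sum_vals[OF xsv] xsc by simp
  have opt: "ln (det (info_matrix A se2 (Sigma_cs sg2 rho) xs)) \<ge> ln (det (info_matrix A se2 (Sigma_cs sg2 rho) xi))"
    if xi: "exact_design I xi" "estimable A xi" for xi
  proof -
    have xipos: "\<forall>j. xi j > 0" using xi(2) unfolding estimable_def by simp
    have sxi: "sum xi UNIV = I" using xi(1) unfolding exact_design_def by simp
    have "CARD('n) = (\<Sum>j\<in>(UNIV::'n set). (1::nat))" by simp
    also have "\<dots> \<le> sum xi UNIV" using xipos by (intro sum_mono) (simp add: Suc_le_eq)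
    finally have JI: "CARD('n) \<le> I" using sxi by simp
    have q1: "I div CARD('n) \<ge> 1" using JI by (simp add: div_greater_zero_iff Suc_le_eq)
    have xspos: "\<forall>j. xs j > 0" using xsv q1 by (metis add_gr_0 less_le_trans zero_less_one)
    have Kle: "Kf se2 c b xs \<le> Kf se2 c b xi"
    proof (rule descent[where I = I])
      show "Kf se2 c b (n(k := n k - 1, l := n l + 1)) \<le> Kf se2 c b n"
        if "\<forall>i. n i \<ge> 1" "n k \<ge> n l + 2" for n :: "'n \<Rightarrow> nat" and k l
        using Kf_step[OF se2 c0 b0 that] .
      show "Kf se2 c b xs \<le> Kf se2 c b n"
        if "\<forall>i. n i \<ge> 1" "sum n UNIV = I" "\<forall>k l. n k < n l + 2" for n :: "'n \<Rightarrow> nat"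
      proof -
        have bn: "(\<forall>i. n i = I div CARD('n) \<or> n i = I div CARD('n) + 1) \<and> card {i. n i = I div CARD('n) + 1} = I mod CARD('n)"
          using balanced[OF that(3,2)] .
        have "Kf se2 c b n = Kf se2 c b xs"
          using bn xsv xsc by (intro Kf_bal_eq) auto
        then show ?thesis by simp
      qed
      show "\<forall>i. xi i \<ge> 1" using xipos by (simp add: Suc_le_eq)
      show "sum xi UNIV = I" using sxi .
    qed
    have D1: "det (info_matrix A se2 (Sigma_cs sg2 rho) xs) = det A ^ 2 / Kf se2 c b xs"
      "Kf se2 c b xs > 0"
      using det_info_Kf(1)[OF se2 sg2 rho xspos, of A] det_info_Kf(2)[OF se2 sg2 rho xspos] unfolding c_def b_def by auto
    have D2: "det (info_matrix A se2 (Sigma_cs sg2 rho) xi) = det A ^ 2 / Kf se2 c b xi"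
      "Kf se2 c b xi > 0"
      using det_info_Kf(1)[OF se2 sg2 rho xipos, of A] det_info_Kf(2)[OF se2 sg2 rho xipos] unfolding c_def b_def by auto
    have dA: "det A ^ 2 > 0" using inv by (simp add: invertible_det_nz)
    have "det A ^ 2 / Kf se2 c b xi \<le> det A ^ 2 / Kf se2 c b xs"
      using Kle D1(2) dA by (intro divide_left_mono) auto
    moreover have "det A ^ 2 / Kf se2 c b xi > 0" using dA D2(2) by simp
    ultimately show ?thesis unfolding D1(1) D2(1) by simp
  qed
  show ?thesis unfolding D_optimal_exact_def using ex opt by blast
qed

theorem lemma3:
  fixes A :: "real^'n::finite^'n" and se2 sg2 rho :: real and I :: nat
    and xs :: "'n \<Rightarrow> nat"
  assumes "se2 > 0" and "sg2 > 0" and "0 \<le> rho" and "rho \<le> 1"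
    and "invertible A" and "I > 0"
    and "\<forall>j. xs j = I div CARD('n) \<or> xs j = I div CARD('n) + 1"
    and "card {j. xs j = I div CARD('n) + 1} = I mod CARD('n)"
  shows "D_optimal_exact A se2 (Sigma_cs sg2 rho) I xs
    \<and> (I mod CARD('n) = 0 \<longrightarrow>
         D_optimal_exact A se2 (Sigma_cs sg2 rho) I (\<lambda>j. I div CARD('n)))"
proof
  show "D_optimal_exact A se2 (Sigma_cs sg2 rho) I xs"
    using main_part[OF assms(1-5,7,8)] .
  show "I mod CARD('n) = 0 \<longrightarrow> D_optimal_exact A se2 (Sigma_cs sg2 rho) I (\<lambda>j. I div CARD('n))"
  proof
    assume "I mod CARD('n) = 0"
    then show "D_optimal_exact A se2 (Sigma_cs sg2 rho) I (\<lambda>j. I div CARD('n))"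
      using main_part[OF assms(1-5), of "\<lambda>j. I div CARD('n)" I] by simp
  qed
qed

end
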